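(* Let $\mathcal{L}:\mathcal{M}_2\to\mathcal{M}_2$ be a doubly stochastic and primitive Liouvillian of the form $\mathcal{L}=T-\text{id}$ for a quantum channel $T$ represented by $\hat T\in\mathcal{M}_3$ in the Bloch sphere picture, and let $r=\sup_{x\in\mathbb{R}^3,\|x\|=1}|\langle x,\hat Tx\rangle|$. Then for all $t\geq0$ and all density matrices $\rho\in\mathcal{M}_2$, $$S(T_t(\rho))-S(\rho)\geq(1-e^{-2(1-r)t})(\log 2-S(\rho)),$$ where $T_t=e^{t\mathcal{L}}$.
   Context: $S(\rho)=-\text{tr}(\rho\log\rho)$. Bloch representation: states are $\rho=\frac12(\mathbb{1}_2+\sum_{i=1}^3x_i\sigma_i)$, $x\in\mathbb{R}^3$, $\sigma_i$ the Pauli matrices; a unital qubit channel acts as $x\mapsto\hat Tx$. Doubly stochastic Liouvillian: $\mathcal{L}(\mathbb{1})=0$; primitive: $e^{t\mathcal{L}}(\rho)\to\mathbb{1}/2$ for all states. *)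

theory Defs
  imports "HOL-Analysis.Analysis" "HOL-Library.Numeral_Type"
begin

type_synonym cmat = "complex^2^2"

definition cadj :: "cmat \<Rightarrow> cmat" where
  "cadj A = (\<chi> i j. cnj (A $ j $ i))"

text \<open>Pauli matrices sigma_1, sigma_2, sigma_3 (indexed by type 3: 1, 2, 3).\<close>
definition sigma1 :: cmat where
  "sigma1 = (\<chi> i j. if i = j then 0 else 1)"
definition sigma2 :: cmat where
  "sigma2 = (\<chi> i j. if i = j then 0 else if i = 0 then - \<i> else \<i>)"
definition sigma3 :: cmat where
  "sigma3 = (\<chi> i j. if i = j then (if i = 0 then 1 else -1) else 0)"

definition pauli :: "3 \<Rightarrow> cmat" where
  "pauli k = (if k = 1 then sigma1 else if k = 2 then sigma2 else sigma3)"

definition bloch :: "real^3 \<Rightarrow> cmat" where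
  "bloch x = (\<chi> i j. (1/2) * ((mat 1 :: cmat) $ i $ j
                     + (\<Sum>k\<in>UNIV. complex_of_real (x $ k) * pauli k $ i $ j)))"

definition density :: "cmat \<Rightarrow> bool" where
  "density \<rho> \<longleftrightarrow> cadj \<rho> = \<rho> \<and> trace \<rho> = 1 \<and>
     (\<forall>v :: complex^2. let q = (\<Sum>i\<in>UNIV. cnj (v $ i) * (\<rho> *v v) $ i)
                        in Im q = 0 \<and> Re q \<ge> 0)"

text \<open>Quantum channel on M_2 (completely positive, trace preserving), given by a
  Kraus representation.\<close>
definition quantum_channel :: "(cmat \<Rightarrow> cmat) \<Rightarrow> bool" where
  "quantum_channel T \<longleftrightarrow> (\<exists>(n::nat) (K :: nat \<Rightarrow> cmat).
      (\<forall>A. T A = (\<Sum>k<n. K k ** A ** cadj (K k))) \<and>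
      (\<Sum>k<n. cadj (K k) ** K k) = mat 1)"

definition semigroup :: "(cmat \<Rightarrow> cmat) \<Rightarrow> real \<Rightarrow> cmat \<Rightarrow> cmat" where
  "semigroup L t \<rho> = (\<Sum>n. (t ^ n / fact n) *\<^sub>R (L ^^ n) \<rho>)"

text \<open>von Neumann entropy S(rho) = - tr(rho log rho) for a Hermitian 2x2 matrix, computed
  on its two eigenvalues (tr +- sqrt(tr^2 - 4 det))/2, with natural log and 0 log 0 = 0.\<close>
definition vn_entropy :: "cmat \<Rightarrow> real" where
  "vn_entropy \<rho> = (let a = Re (trace \<rho>); d = Re (det \<rho>); s = sqrt (a\<^sup>2 - 4 * d);
                       l1 = (a + s) / 2; l2 = (a - s) / 2
                   in - (l1 * ln l1) - (l2 * ln l2))"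

end

theory Submission
  imports Defs "HOL-Real_Asymp.Real_Asymp"
begin


definition qf :: "cmat \<Rightarrow> complex^2 \<Rightarrow> complex" where
  "qf A v = (\<Sum>i\<in>UNIV. cnj (v $ i) * (A *v v) $ i)"

definition psd :: "cmat \<Rightarrow> bool" where
  "psd A \<longleftrightarrow> (\<forall>v. Im (qf A v) = 0 \<and> Re (qf A v) \<ge> 0)"

lemma density_psd: "density \<rho> \<Longrightarrow> psd \<rho>"
  unfolding density_def psd_def qf_def Let_def by blast

lemma qf_kraus: "qf (K ** A ** cadj K) v = qf A (cadj K *v v)"
  unfolding qf_def
  by (simp add: matrix_vector_mul_assoc[symmetric] matrix_vector_mult_def matrix_matrix_mult_def sum_2 cadj_def
      algebra_simps)

lemma qf_sum: "qf (\<Sum>k<(n::nat). A k) v = (\<Sum>k<n. qf (A k) v)"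
  by (induction n) (simp_all add: qf_def matrix_vector_mult_add_rdistrib sum.distrib distrib_left)

lemma kraus_psd:
  assumes "quantum_channel T" "psd A" shows "psd (T A)"
proof -
  obtain n :: nat and K :: "nat \<Rightarrow> cmat" where TK: "\<And>A. T A = (\<Sum>k<n. K k ** A ** cadj (K k))"
    using assms(1) unfolding quantum_channel_def by blast
  show ?thesis unfolding psd_def
  proof
    fix v
    have q: "qf (T A) v = (\<Sum>k<n. qf A (cadj (K k) *v v))"
      by (simp add: TK qf_sum qf_kraus)
    have "Im (qf (T A) v) = (\<Sum>k<n. Im (qf A (cadj (K k) *v v)))" by (simp add: q)
    also have "\<dots> = 0" using assms(2) unfolding psd_def by simp
    finally have 1: "Im (qf (T A) v) = 0" .
    have "Re (qf (T A) v) = (\<Sum>k<n. Re (qf A (cadj (K k) *v v)))" by (simp add: q)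
    also have "\<dots> \<ge> 0" using assms(2) unfolding psd_def by (intro sum_nonneg) simp
    finally show "Im (qf (T A) v) = 0 \<and> Re (qf (T A) v) \<ge> 0" using 1 by simp
  qed
qed

lemma matrix_add_rdistrib': "((A::cmat) + B) ** C = A ** C + B ** C"
  by (simp add: matrix_matrix_mult_def vec_eq_iff sum.distrib distrib_right)

lemma kraus_add:
  assumes "quantum_channel T" shows "T (A + B) = T A + T B"
proof -
  obtain n :: nat and K :: "nat \<Rightarrow> cmat" where TK: "\<And>A. T A = (\<Sum>k<n. K k ** A ** cadj (K k))"
    using assms(1) unfolding quantum_channel_def by blast
  show ?thesis by (simp add: TK matrix_add_ldistrib matrix_add_rdistrib' sum.distrib)
qed

lemma kraus_diff:
  assumes "quantum_channel T" shows "T (A - B) = T A - T B"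
  using kraus_add[OF assms, of "A - B" B] by simp



lemma bloch_entries:
  "bloch x $ 1 $ 1 = complex_of_real ((1 - x$3)/2)"
  "bloch x $ 2 $ 2 = complex_of_real ((1 + x$3)/2)"
  "bloch x $ 1 $ 2 = Complex (x$1/2) (x$2/2)"
  "bloch x $ 2 $ 1 = Complex (x$1/2) (- x$2/2)"
  by (simp_all add: bloch_def sum_3 pauli_def sigma1_def sigma2_def sigma3_def mat_def complex_eq_iff)

lemma norm3: "(norm (y::real^3))^2 = (y$1)^2 + (y$2)^2 + (y$3)^2"
  unfolding power2_norm_eq_inner by (simp add: inner_vec_def sum_3 power2_eq_square)

lemma qf_bloch_Re: "Re (qf (bloch y) v) =
   ((1 - y$3)/2) * ((Re (v$1))^2 + (Im (v$1))^2) + ((1 + y$3)/2) * ((Re (v$2))^2 + (Im (v$2))^2)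
   + y$1 * (Re (v$1) * Re (v$2) + Im (v$1) * Im (v$2)) + y$2 * (Im (v$1) * Re (v$2) - Re (v$1) * Im (v$2))"
  by (simp add: qf_def sum_2 matrix_vector_mult_def bloch_entries) (simp add: field_simps power2_eq_square)

lemma qf_bloch_Im: "Im (qf (bloch y) v) = 0"
  by (simp add: qf_def sum_2 matrix_vector_mult_def bloch_entries algebra_simps)

lemma psd_bloch_norm:
  assumes "psd (bloch y)" shows "norm y \<le> 1"
proof -
  define a where "a = (1 - y$3)/2"
  define d where "d = (1 + y$3)/2"
  have n: "(norm y)^2 = (y$1)^2 + (y$2)^2 + (y$3)^2" by (rule norm3)
  have "(norm y)^2 \<le> 1"
  proof (cases "a > 0")
    case True
    define v :: "complex^2" where "v = (\<chi> i. if i = 1 then Complex (y$1/2) (y$2/2) else - complex_of_real a)"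
    have "Re (qf (bloch y) v) \<ge> 0" using assms unfolding psd_def by blast
    moreover have "Re (qf (bloch y) v) = a * (1 - (norm y)^2) / 4"
      unfolding qf_bloch_Re n by (simp add: v_def a_def) (simp add: field_simps power2_eq_square)
    ultimately show ?thesis using True by (simp add: zero_le_mult_iff)
  next
    case False
    then have dp: "d > 0" by (simp add: a_def d_def)
    define v :: "complex^2" where "v = (\<chi> i. if i = 1 then complex_of_real d else - Complex (y$1/2) (- y$2/2))"
    have "Re (qf (bloch y) v) \<ge> 0" using assms unfolding psd_def by blast
    moreover have "Re (qf (bloch y) v) = d * (1 - (norm y)^2) / 4"
      unfolding qf_bloch_Re n by (simp add: v_def d_def) (simp add: field_simps power2_eq_square)
    ultimately show ?thesis using dp by (simp add: zero_le_mult_iff)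
  qed
  then show ?thesis by (simp add: power_le_one_iff)
qed

lemma cs3: "(a1*b1 + a2*b2 + a3*b3)^2 \<le> (a1^2+a2^2+a3^2)*(b1^2+b2^2+b3^2::real)"
proof -
  have "(a1^2+a2^2+a3^2)*(b1^2+b2^2+b3^2) - (a1*b1 + a2*b2 + a3*b3)^2
     = (a1*b2-a2*b1)^2 + (a1*b3-a3*b1)^2 + (a2*b3-a3*b2)^2"
    by (simp add: algebra_simps power2_eq_square)
  moreover have "(a1*b2-a2*b1)^2 + (a1*b3-a3*b1)^2 + (a2*b3-a3*b2)^2 \<ge> 0" by simp
  ultimately show ?thesis by linarith
qed

lemma bloch_psd:
  assumes "norm y \<le> 1" shows "psd (bloch y)"
  unfolding psd_def
proof
  fix v :: "complex^2"
  define p1 where "p1 = Re (v$1)" define p2 where "p2 = Im (v$1)"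
  define w1 where "w1 = Re (v$2)" define w2 where "w2 = Im (v$2)"
  define S where "S = p1^2 + p2^2 + w1^2 + w2^2"
  define u1 where "u1 = 2 * (p1 * w1 + p2 * w2)"
  define u2 where "u2 = 2 * (p2 * w1 - p1 * w2)"
  define u3 where "u3 = w1^2 + w2^2 - p1^2 - p2^2"
  have S0: "S \<ge> 0" unfolding S_def by simp
  have uS: "u1^2 + u2^2 + u3^2 = S^2"
    unfolding u1_def u2_def u3_def S_def by (simp add: algebra_simps power2_eq_square)
  have yn: "(y$1)^2 + (y$2)^2 + (y$3)^2 \<le> 1"
    using assms norm3[of y] by (metis norm_ge_zero power_le_one)
  have "(y$1*u1 + y$2*u2 + y$3*u3)^2 \<le> ((y$1)^2 + (y$2)^2 + (y$3)^2) * (u1^2+u2^2+u3^2)"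
    by (rule cs3)
  also have "\<dots> \<le> 1 * S^2" unfolding uS using yn by (intro mult_right_mono) auto
  finally have "(y$1*u1 + y$2*u2 + y$3*u3)^2 \<le> S^2" by simp
  then have "\<bar>y$1*u1 + y$2*u2 + y$3*u3\<bar> \<le> S" using S0 by (metis abs_le_square_iff abs_of_nonneg)
  then have "S + (y$1*u1 + y$2*u2 + y$3*u3) \<ge> 0" by linarith
  moreover have "Re (qf (bloch y) v) = (S + (y$1*u1 + y$2*u2 + y$3*u3)) / 2"
    unfolding qf_bloch_Re S_def u1_def u2_def u3_def p1_def p2_def w1_def w2_def
    by (simp add: field_simps power2_eq_square)
  ultimately show "Im (qf (bloch y) v) = 0 \<and> Re (qf (bloch y) v) \<ge> 0"
    by (simp add: qf_bloch_Im)
qed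

lemma density_bloch:
  assumes "density \<rho>" shows "\<exists>x. \<rho> = bloch x \<and> norm x \<le> 1"
proof -
  have h: "cadj \<rho> = \<rho>" and tr: "trace \<rho> = 1" using assms unfolding density_def by auto
  have h11: "cnj (\<rho>$1$1) = \<rho>$1$1" and h22: "cnj (\<rho>$2$2) = \<rho>$2$2" and h21: "cnj (\<rho>$1$2) = \<rho>$2$1"
    using h unfolding cadj_def vec_eq_iff by auto
  have i11: "Im (\<rho>$1$1) = 0" using h11 by (simp add: complex_eq_iff)
  have i22: "Im (\<rho>$2$2) = 0" using h22 by (simp add: complex_eq_iff)
  have t: "\<rho>$1$1 + \<rho>$2$2 = 1" using tr by (simp add: trace_def sum_2)
  define x :: "real^3" where "x = vector [2 * Re (\<rho>$1$2), 2 * Im (\<rho>$1$2), Re (\<rho>$2$2) - Re (\<rho>$1$1)]"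
  have "\<rho> = bloch x"
    unfolding vec_eq_iff forall_2 using t i11 i22 h21
    by (auto simp: bloch_entries x_def complex_eq_iff)
  moreover have "norm x \<le> 1" using density_psd[OF assms] \<open>\<rho> = bloch x\<close> psd_bloch_norm by metis
  ultimately show ?thesis by blast
qed



definition fH :: "real \<Rightarrow> real" where
  "fH s = ((1 + s) * ln (1 + s) + (1 - s) * ln (1 - s)) / 2"

definition gH :: "real \<Rightarrow> real" where
  "gH s = (ln (1 + s) - ln (1 - s)) / 2"

lemma fH_deriv: "\<bar>x\<bar> < 1 \<Longrightarrow> DERIV fH x :> gH x"
  unfolding fH_def gH_def
  by (rule derivative_eq_intros refl | simp add: abs_less_iff)+

lemma gH_deriv: "\<bar>x\<bar> < 1 \<Longrightarrow> DERIV gH x :> 1 / (1 - x^2)"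
  unfolding gH_def
  by (rule derivative_eq_intros refl | simp)+ (simp add: field_simps power2_eq_square)

lemma aH_nonneg:
  assumes "0 \<le> s" "s < 1" shows "gH s \<le> s / (1 - s^2)"
proof -
  let ?a = "\<lambda>x. x / (1 - x^2) - gH x"
  have "?a 0 \<le> ?a s"
  proof (rule DERIV_nonneg_imp_nondecreasing[OF assms(1)])
    fix x assume x: "0 \<le> x" "x \<le> s"
    then have x1: "\<bar>x\<bar> < 1" "x < 1" "x\<^sup>2 < 1" using assms by (auto simp: abs_square_less_1)
    then have ne: "1 - x^2 \<noteq> 0" by simp
    have ne': "x * x \<noteq> 1" using ne by (simp add: power2_eq_square)
    have d1: "DERIV (\<lambda>x. x / (1 - x^2)) x :> (1*(1-x^2) - x*(0 - 2*x))/((1-x^2)*(1-x^2))"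
    proof -
      have e: "1 + x*(x*(x*x)) - x*(x*2) = (1 - x*x)*(1-x*x)" by algebra
      have dd: "1 + x*(x*(x*x)) - x*(x*2) \<noteq> 0" unfolding e using ne' by simp
      show ?thesis using ne ne' dd by (auto intro!: derivative_eq_intros simp: field_simps)
    qed
    have "DERIV ?a x :> (1*(1-x^2) - x*(0 - 2*x))/((1-x^2)*(1-x^2)) - 1 / (1 - x^2)"
      by (rule DERIV_diff[OF d1 gH_deriv[OF x1(1)]])
    moreover have "(1*(1-x^2) - x*(0 - 2*x))/((1-x^2)*(1-x^2)) - 1 / (1 - x^2) = 2 * x^2 / ((1-x^2)*(1-x^2))"
    proof -
      have g: "\<And>D c::real. D \<noteq> 0 \<Longrightarrow> (D + c)/(D*D) - 1/D = c/(D*D)" by (simp add: field_simps)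
      have h: "1*(1-x^2) - x*(0 - 2*x) = (1-x^2) + 2*x^2" by (simp add: power2_eq_square)
      show ?thesis unfolding h by (rule g[OF ne])
    qed
    ultimately show "\<exists>y. DERIV ?a x :> y \<and> 0 \<le> y" by auto
  qed
  then show ?thesis by (simp add: gH_def)
qed

lemma kH_nonneg:
  assumes "0 \<le> s" "s < 1" shows "2 * fH s \<le> s * gH s"
proof -
  let ?k = "\<lambda>x. x * gH x - 2 * fH x"
  have "?k 0 \<le> ?k s"
  proof (rule DERIV_nonneg_imp_nondecreasing[OF assms(1)])
    fix x assume x: "0 \<le> x" "x \<le> s"
    then have x1: "\<bar>x\<bar> < 1" "x < 1" "x\<^sup>2 < 1" using assms by (auto simp: abs_square_less_1)
    have "DERIV ?k x :> (gH x + x * (1 / (1 - x^2))) - 2 * gH x"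
      by (rule derivative_eq_intros refl gH_deriv fH_deriv x1 | simp)+
    moreover have "(gH x + x * (1 / (1 - x^2))) - 2 * gH x \<ge> 0"
      using aH_nonneg[of x] x x1 by simp
    ultimately show "\<exists>y. DERIV ?k x :> y \<and> 0 \<le> y" by blast
  qed
  then show ?thesis by (simp add: fH_def)
qed

lemma fH_0: "fH 0 = 0" by (simp add: fH_def)
lemma fH_1: "fH 1 = ln 2" by (simp add: fH_def)

lemma fH_lim1: "(fH \<longlongrightarrow> fH 1) (at_left 1)"
  unfolding fH_1 unfolding fH_def by real_asymp

lemma qH_lim1: "((\<lambda>s. fH s / s^2) \<longlongrightarrow> fH 1 / 1^2) (at_left 1)"
  unfolding fH_1 unfolding fH_def by real_asymp

lemma cont_helper:
  fixes h :: "real \<Rightarrow> real"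
  assumes "a < b" "b \<le> 1" and c: "\<And>x. a \<le> x \<Longrightarrow> x < 1 \<Longrightarrow> isCont h x"
    and l: "(h \<longlongrightarrow> h 1) (at_left 1)"
  shows "continuous_on {a..b} h"
proof (rule continuous_on_IccI)
  have "isCont h a" using c assms by simp
  then show "(h \<longlongrightarrow> h a) (at_right a)"
    unfolding isCont_def by (rule tendsto_within_subset) auto
  show "(h \<longlongrightarrow> h b) (at_left b)"
  proof (cases "b < 1")
    case True
    then have "isCont h b" using c assms by simp
    then show ?thesis unfolding isCont_def by (rule tendsto_within_subset) auto
  next
    case False
    then show ?thesis using l assms by simp
  qed
  show "\<And>x. a < x \<Longrightarrow> x < b \<Longrightarrow> h \<midarrow>x\<rightarrow> h x"
    using c assms unfolding isCont_def by simp
qed (use assms in simp)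

lemma gH_nonneg: "0 \<le> x \<Longrightarrow> x < 1 \<Longrightarrow> gH x \<ge> 0"
  unfolding gH_def by simp

lemma fH_mono:
  assumes "0 \<le> a" "a \<le> b" "b \<le> 1" shows "fH a \<le> fH b"
proof (cases "a = b")
  case False
  then have ab: "a < b" using assms by simp
  show ?thesis
  proof (rule DERIV_nonneg_imp_increasing_open[OF assms(2)])
    fix x assume "a < x" "x < b"
    then have "\<bar>x\<bar> < 1" "0 \<le> x" "x < 1" using assms by auto
    then show "\<exists>y. DERIV fH x :> y \<and> y \<ge> 0" using fH_deriv gH_nonneg by blast
  next
    show "continuous_on {a..b} fH"
    proof (rule cont_helper[OF ab assms(3)])
      fix x assume "a \<le> x" "x < 1"
      then have "\<bar>x\<bar> < 1" using assms by auto
      then show "isCont fH x" using fH_deriv DERIV_isCont by blast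
    qed (rule fH_lim1)
  qed
qed simp

lemma fH_nonneg: "0 \<le> s \<Longrightarrow> s \<le> 1 \<Longrightarrow> fH s \<ge> 0"
  using fH_mono[of 0 s] by (simp add: fH_0)

lemma qH_deriv:
  assumes "0 < x" "x < 1"
  shows "DERIV (\<lambda>s. fH s / s^2) x :> (gH x * x^2 - fH x * (2 * x)) / (x^2 * x^2)"
proof -
  have "\<bar>x\<bar> < 1" using assms by auto
  have d2: "DERIV (\<lambda>s. s^2) x :> 2 * x"
    by (auto intro!: derivative_eq_intros)
  show ?thesis
    using DERIV_divide[OF fH_deriv[OF \<open>\<bar>x\<bar> < 1\<close>] d2] assms by simp
qed

lemma qH_mono:
  assumes "0 < a" "a \<le> b" "b \<le> 1" shows "fH a / a^2 \<le> fH b / b^2"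
proof (cases "a = b")
  case False
  then have ab: "a < b" using assms by simp
  show ?thesis
  proof (rule DERIV_nonneg_imp_increasing_open[OF assms(2), where f = "\<lambda>s. fH s / s^2"])
    fix x assume "a < x" "x < b"
    then have x: "0 < x" "x < 1" using assms by auto
    have "2 * fH x \<le> x * gH x" using kH_nonneg[of x] x by simp
    then have "gH x * x^2 - fH x * (2 * x) \<ge> 0" using x
      by (simp add: power2_eq_square) (metis mult.commute mult_left_mono mult.assoc less_imp_le diff_ge_0_iff_ge)
    then have "(gH x * x^2 - fH x * (2 * x)) / (x^2 * x^2) \<ge> 0" by simp
    then show "\<exists>y. DERIV (\<lambda>s. fH s / s^2) x :> y \<and> y \<ge> 0" using qH_deriv[OF x] by blast
  next
    show "continuous_on {a..b} (\<lambda>s. fH s / s^2)"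
    proof (rule cont_helper[OF ab assms(3)])
      fix x assume "a \<le> x" "x < 1"
      then have x: "0 < x" "x < 1" using assms by auto
      then show "isCont (\<lambda>s. fH s / s^2) x" using qH_deriv[OF x] DERIV_isCont by blast
    qed (use qH_lim1 in simp)
  qed
qed simp

lemma fH_scale:
  assumes "0 \<le> l" "l \<le> 1" "0 \<le> s" "s \<le> 1"
  shows "fH (l * s) \<le> l^2 * fH s"
proof (cases "l * s = 0")
  case True
  then have "fH (l * s) = 0" by (metis fH_0)
  then show ?thesis using fH_nonneg[OF assms(3,4)] assms by simp
next
  case False
  then have p: "0 < l" "0 < s" using assms by (auto simp: less_le)
  have "fH (l * s) / (l * s)^2 \<le> fH s / s^2"
    using qH_mono[of "l * s" s] p assms by (simp add: mult_left_le_one_le)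
  then show ?thesis using p by (simp add: field_simps power_mult_distrib)
qed



lemma xlnhalf: "0 \<le> (a::real) \<Longrightarrow> (a/2) * ln (a/2) = (a/2) * (ln a - ln 2)"
  by (cases "a = 0") (simp_all add: ln_div)

lemma vn_bloch:
  assumes "norm z \<le> 1" shows "vn_entropy (bloch z) = ln 2 - fH (norm z)"
proof -
  have tr: "Re (trace (bloch z)) = 1" by (simp add: trace_def sum_2 bloch_entries) (simp add: field_simps)
  have dt: "Re (det (bloch z)) = (1 - (norm z)^2) / 4"
    unfolding norm3 by (simp add: det_2 bloch_entries) (simp add: field_simps power2_eq_square)
  have s: "sqrt (1\<^sup>2 - 4 * ((1 - (norm z)^2) / 4)) = norm z"
  proof -
    have "1\<^sup>2 - 4 * ((1 - (norm z)^2) / 4) = (norm z)^2" by (simp add: field_simps)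
    then show ?thesis by simp
  qed
  show ?thesis
    unfolding vn_entropy_def Let_def tr dt s
    using xlnhalf[of "1 + norm z"] xlnhalf[of "1 - norm z"] assms
    by (simp add: fH_def field_simps)
qed



definition Pw :: "real^3^3 \<Rightarrow> real^3 \<Rightarrow> nat \<Rightarrow> real^3" where
  "Pw M x n = ((\<lambda>v. M *v v) ^^ n) x"

definition ysol :: "real^3^3 \<Rightarrow> real^3 \<Rightarrow> real \<Rightarrow> real^3" where
  "ysol M x t = (\<Sum>n. (t^n / fact n) *\<^sub>R Pw M x n)"

lemma Pw_0[simp]: "Pw M x 0 = x" by (simp add: Pw_def)
lemma Pw_Suc: "Pw M x (Suc n) = M *v Pw M x n" by (simp add: Pw_def)

lemma Pw_bound:
  obtains K where "K > 0" "\<And>n. norm (Pw M x n) \<le> K^n * norm x"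
proof -
  have "bounded_linear (\<lambda>v. M *v v)" by (simp add: matrix_vector_mul_bounded_linear)
  then obtain K where K: "K > 0" "\<And>v. norm (M *v v) \<le> norm v * K"
    using bounded_linear.pos_bounded by blast
  have "norm (Pw M x n) \<le> K^n * norm x" for n
  proof (induction n)
    case 0 then show ?case by simp
  next
    case (Suc n)
    have "norm (Pw M x (Suc n)) \<le> norm (Pw M x n) * K" unfolding Pw_Suc by (rule K(2))
    also have "\<dots> \<le> (K^n * norm x) * K" using Suc K(1) by (intro mult_right_mono) auto
    finally show ?case by (simp add: algebra_simps)
  qed
  then show ?thesis using K(1) that by blast
qed

lemma summable_scaled:
  fixes f :: "nat \<Rightarrow> 'a::banach"
  assumes "\<And>n. norm (f n) \<le> K^n * B" "K > 0"
  shows "summable (\<lambda>n. (t^n / fact n) *\<^sub>R f n)"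
proof (rule summable_norm_cancel, rule summable_comparison_test)
  show "summable (\<lambda>n. B * (inverse (fact n) * (\<bar>t\<bar> * K)^n))"
    by (intro summable_mult summable_exp)
  show "\<exists>N. \<forall>n\<ge>N. norm (norm ((t ^ n / fact n) *\<^sub>R f n)) \<le> B * (inverse (fact n) * (\<bar>t\<bar> * K) ^ n)"
  proof (intro exI allI impI)
    fix n :: nat
    have "norm (norm ((t ^ n / fact n) *\<^sub>R f n)) = (\<bar>t\<bar>^n / fact n) * norm (f n)"
      by (simp add: power_abs)
    also have "\<dots> \<le> (\<bar>t\<bar>^n / fact n) * (K^n * B)" by (intro mult_left_mono assms) auto
    also have "\<dots> = B * (inverse (fact n) * (\<bar>t\<bar> * K) ^ n)"
      by (simp add: power_mult_distrib field_simps)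
    finally show "norm (norm ((t ^ n / fact n) *\<^sub>R f n)) \<le> B * (inverse (fact n) * (\<bar>t\<bar> * K) ^ n)" .
  qed
qed

lemma ysol_sums: "(\<lambda>n. (t^n / fact n) *\<^sub>R Pw M x n) sums ysol M x t"
proof -
  obtain K where "K > 0" "\<And>n. norm (Pw M x n) \<le> K^n * norm x" using Pw_bound by blast
  then show ?thesis unfolding ysol_def by (intro summable_sums summable_scaled)
qed

lemma ysol_0: "ysol M x 0 = x"
proof -
  have "(\<lambda>n. (0^n / fact n) *\<^sub>R Pw M x n) = (\<lambda>n. if n = 0 then Pw M x n else 0)"
    by (auto simp: fun_eq_iff)
  then have "(\<lambda>n. (0^n / fact n) *\<^sub>R Pw M x n) sums x" using sums_single[of 0 "Pw M x"] by simp
  then show ?thesis using ysol_sums[of 0 M x] sums_unique2 by blast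
qed

lemma ysol_comp_sums: "(\<lambda>n. (Pw M x n $ i / fact n) * t^n) sums (ysol M x t $ i)"
proof -
  have "(\<lambda>n. ((t^n / fact n) *\<^sub>R Pw M x n) $ i) sums (ysol M x t $ i)"
    by (rule bounded_linear.sums[OF bounded_linear_vec_nth ysol_sums])
  then show ?thesis by (simp add: field_simps)
qed

lemma ysol_M_sums: "(\<lambda>n. (Pw M x (Suc n) $ i / fact n) * t^n) sums ((M *v ysol M x t) $ i)"
proof -
  have bl: "bounded_linear (\<lambda>v. (M *v v) $ i)"
    by (intro bounded_linear_compose[OF bounded_linear_vec_nth] matrix_vector_mul_bounded_linear)
  have "(\<lambda>n. (M *v ((t^n / fact n) *\<^sub>R Pw M x n)) $ i) sums ((M *v ysol M x t) $ i)"
    by (rule bounded_linear.sums[OF bl ysol_sums])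
  then show ?thesis by (simp add: Pw_Suc matrix_vector_mult_scaleR field_simps)
qed

lemma ysol_comp_deriv: "DERIV (\<lambda>t. ysol M x t $ i) t :> (M *v ysol M x t) $ i"
proof -
  define c where "c n = Pw M x n $ i / fact n" for n
  have sm: "summable (\<lambda>n. c n * z^n)" for z
    using ysol_comp_sums[of M x i z] unfolding c_def by (rule sums_summable)
  have eq: "(\<lambda>t. ysol M x t $ i) = (\<lambda>t. \<Sum>n. c n * t^n)"
    using ysol_comp_sums[of M x i] unfolding c_def by (auto simp: fun_eq_iff sums_iff)
  have d: "DERIV (\<lambda>t. \<Sum>n. c n * t^n) t :> (\<Sum>n. diffs c n * t^n)"
    by (rule termdiffs_strong'[where K = "\<bar>t\<bar> + 1"]) (use sm in auto)
  have gen: "\<And>a p b::real. a \<noteq> 0 \<Longrightarrow> a * (p / (a * b)) = p / b" by simp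
  have "diffs c n = Pw M x (Suc n) $ i / fact n" for n
    unfolding diffs_def c_def fact_Suc by (rule gen) simp
  then have "(\<lambda>n. diffs c n * t^n) = (\<lambda>n. (Pw M x (Suc n) $ i / fact n) * t^n)"
    by simp
  then have "(\<Sum>n. diffs c n * t^n) = (M *v ysol M x t) $ i"
    using ysol_M_sums[of M x i t] by (simp add: sums_iff)
  then show ?thesis using d eq by simp
qed

lemma ysol_normsq_deriv:
  "DERIV (\<lambda>t. ysol M x t \<bullet> ysol M x t) t :> 2 * (ysol M x t \<bullet> (M *v ysol M x t))"
proof -
  have "DERIV (\<lambda>t. \<Sum>i\<in>UNIV. ysol M x t $ i * ysol M x t $ i) t :>
          (\<Sum>i\<in>UNIV. ysol M x t $ i * (M *v ysol M x t) $ i + (M *v ysol M x t) $ i * ysol M x t $ i)"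
    by (intro DERIV_sum DERIV_mult' ysol_comp_deriv)
  then show ?thesis
    by (simp add: inner_vec_def sum.distrib[symmetric] sum_distrib_left algebra_simps)
qed

lemma ysol_decay:
  assumes rb: "\<And>v. v \<bullet> (A *v v) \<le> r * (v \<bullet> v)" and t: "t \<ge> 0"
  shows "norm (ysol (A - mat 1) x t) \<le> exp (- (1 - r) * t) * norm x"
proof -
  define M where "M = A - mat 1"
  define g where "g s = exp (2 * (1 - r) * s) * (ysol M x s \<bullet> ysol M x s)" for s
  have "g t \<le> g 0"
  proof (rule DERIV_nonpos_imp_nonincreasing[OF t])
    fix s :: real
    let ?y = "ysol M x s"
    have d: "DERIV g s :> exp (2 * (1 - r) * s) * (2 * (1 - r)) * (?y \<bullet> ?y) + exp (2 * (1 - r) * s) * (2 * (?y \<bullet> (M *v ?y)))"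
      unfolding g_def
      by (rule derivative_eq_intros ysol_normsq_deriv refl | simp)+
    have "?y \<bullet> (M *v ?y) = ?y \<bullet> (A *v ?y) - ?y \<bullet> ?y"
      by (simp add: M_def matrix_vector_mult_diff_rdistrib inner_diff_right)
    then have "?y \<bullet> (M *v ?y) \<le> (r - 1) * (?y \<bullet> ?y)" using rb[of ?y] by (simp add: algebra_simps)
    then have "(2 * (1 - r)) * (?y \<bullet> ?y) + 2 * (?y \<bullet> (M *v ?y)) \<le> 0" by (simp add: algebra_simps)
    then have "exp (2 * (1 - r) * s) * ((2 * (1 - r)) * (?y \<bullet> ?y) + 2 * (?y \<bullet> (M *v ?y))) \<le> 0"
      by (simp add: mult_nonneg_nonpos)
    then show "\<exists>y. DERIV g s :> y \<and> y \<le> 0" using d by (intro exI[of _ _] conjI) (auto simp: algebra_simps)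
  qed
  then have "exp (2 * (1 - r) * t) * (norm (ysol M x t))^2 \<le> (norm x)^2"
    by (simp add: g_def ysol_0 power2_norm_eq_inner)
  then have "(norm (ysol M x t))^2 \<le> exp (- (2 * (1 - r) * t)) * (norm x)^2"
  proof -
    assume h: "exp (2 * (1 - r) * t) * (norm (ysol M x t))^2 \<le> (norm x)^2"
    define a where "a = 2 * (1 - r) * t"
    define N where "N = (norm (ysol M x t))^2"
    have h': "exp a * N \<le> (norm x)^2" using h unfolding a_def N_def .
    have "N = exp (- a) * (exp a * N)" by (simp add: exp_minus)
    also have "\<dots> \<le> exp (- a) * (norm x)^2" using h' by (intro mult_left_mono) auto
    finally show ?thesis unfolding a_def N_def .
  qed
  also have "exp (- (2 * (1 - r) * t)) = (exp (- (1 - r) * t))^2"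
    by (simp add: power2_eq_square exp_add[symmetric]) (simp add: algebra_simps)
  finally have "(norm (ysol M x t))^2 \<le> (exp (- (1 - r) * t) * norm x)^2"
    by (simp add: power_mult_distrib)
  then show ?thesis unfolding M_def by (rule power2_le_imp_le) simp
qed



definition lin :: "real^3 \<Rightarrow> cmat" where "lin v = bloch v - bloch 0"

lemma lin_entries:
  "lin v $ 1 $ 1 = complex_of_real (- v$3/2)"
  "lin v $ 2 $ 2 = complex_of_real (v$3/2)"
  "lin v $ 1 $ 2 = Complex (v$1/2) (v$2/2)"
  "lin v $ 2 $ 1 = Complex (v$1/2) (- v$2/2)"
  by (simp_all add: lin_def bloch_entries complex_eq_iff field_simps)

lemma bloch_diff: "bloch a - bloch b = lin (a - b)"
  unfolding vec_eq_iff forall_2 by (simp add: lin_entries bloch_entries complex_eq_iff field_simps)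

lemma lin_add: "lin (a + b) = lin a + lin b"
  unfolding vec_eq_iff forall_2 by (simp add: lin_entries complex_eq_iff)

lemma lin_scale: "lin (c *\<^sub>R a) = c *\<^sub>R lin a"
  unfolding vec_eq_iff forall_2 by (simp add: lin_entries complex_eq_iff scaleR_vec_def)

lemma bl_lin: "bounded_linear lin"
proof -
  have "linear lin" by (rule linearI) (simp_all add: lin_add lin_scale)
  then show ?thesis using linear_conv_bounded_linear by blast
qed

lemma semigroup_bloch:
  assumes chan: "quantum_channel T"
    and rep: "\<forall>x. T (bloch x) = bloch (That *v x)"
    and L_def: "L = (\<lambda>A. T A - A)"
  shows "semigroup L t (bloch x) = bloch (ysol (That - mat 1) x t)"
proof -
  define M where "M = That - mat 1"
  have Ladd: "L (A + B) = L A + L B" for A B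
    unfolding L_def using kraus_add[OF chan] by (simp add: algebra_simps)
  have L0: "L 0 = 0" using Ladd[of 0 0] by simp
  have Lb0: "L (bloch 0) = 0" unfolding L_def using rep by simp
  have Llin: "L (lin v) = lin (M *v v)" for v
  proof -
    have "L (lin v) = T (bloch v) - T (bloch 0) - lin v"
      unfolding L_def lin_def by (simp add: kraus_diff[OF chan])
    also have "\<dots> = bloch (That *v v) - bloch v" using rep by (simp add: lin_def)
    also have "\<dots> = lin (M *v v)" by (simp add: bloch_diff M_def matrix_vector_mult_diff_rdistrib)
    finally show ?thesis .
  qed
  have pow: "(L ^^ n) (bloch x) = (if n = 0 then bloch 0 else 0) + lin (Pw M x n)" for n
  proof (induction n)
    case 0 then show ?case by (simp add: lin_def)
  next
    case (Suc n)
    have "(L ^^ Suc n) (bloch x) = L ((if n = 0 then bloch 0 else 0) + lin (Pw M x n))"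
      using Suc by simp
    also have "\<dots> = lin (Pw M x (Suc n))"
      by (simp add: Ladd L0 Lb0 Llin Pw_Suc)
    finally show ?case by simp
  qed
  have s1: "(\<lambda>n. (t^n / fact n) *\<^sub>R (if n = 0 then bloch 0 else (0::cmat))) sums bloch 0"
  proof -
    have "(\<lambda>n. (t^n / fact n) *\<^sub>R (if n = 0 then bloch 0 else (0::cmat))) = (\<lambda>n. if n = 0 then (\<lambda>_. bloch 0) n else 0)"
      by (auto simp: fun_eq_iff)
    then show ?thesis using sums_single[of 0 "\<lambda>_. bloch 0"] by simp
  qed
  have s2: "(\<lambda>n. (t^n / fact n) *\<^sub>R lin (Pw M x n)) sums lin (ysol M x t)"
    using bounded_linear.sums[OF bl_lin ysol_sums[of t M x]] by (simp add: lin_scale)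
  have "(\<lambda>n. (t^n / fact n) *\<^sub>R (L ^^ n) (bloch x)) sums (bloch 0 + lin (ysol M x t))"
    unfolding pow scaleR_right_distrib by (rule sums_add[OF s1 s2])
  then have "semigroup L t (bloch x) = bloch 0 + lin (ysol M x t)"
    unfolding semigroup_def by (simp add: sums_iff)
  then show ?thesis by (simp add: lin_def M_def)
qed



lemma That_contr:
  assumes chan: "quantum_channel T" and rep: "\<forall>x. T (bloch x) = bloch (That *v x)"
  shows "norm (That *v v) \<le> norm v"
proof (cases "v = 0")
  case False
  define u where "u = (1 / norm v) *\<^sub>R v"
  have "norm u = 1" using False by (simp add: u_def)
  then have "psd (bloch u)" by (intro bloch_psd) simp
  then have "psd (T (bloch u))" by (rule kraus_psd[OF chan])
  then have "psd (bloch (That *v u))" using rep by simp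
  then have "norm (That *v u) \<le> 1" by (rule psd_bloch_norm)
  moreover have "That *v u = (1 / norm v) *\<^sub>R (That *v v)" by (simp add: u_def matrix_vector_mult_scaleR)
  ultimately show ?thesis using False by (simp add: divide_le_eq)
qed simp

theorem mainTheorem9:
  fixes T :: "cmat \<Rightarrow> cmat" and That :: "real^3^3" and L :: "cmat \<Rightarrow> cmat" and r :: real
  assumes chan: "quantum_channel T"
    and rep: "\<forall>x. T (bloch x) = bloch (That *v x)"
    and L_def: "L = (\<lambda>A. T A - A)"
    and dstoch: "L (mat 1) = 0"
    and prim: "\<forall>\<rho>. density \<rho> \<longrightarrow> ((\<lambda>t. semigroup L t \<rho>) \<longlongrightarrow> (1/2 :: real) *\<^sub>R (mat 1 :: cmat)) at_top"
    and r_def: "r = Sup {\<bar>x \<bullet> (That *v x)\<bar> | x. norm x = 1}"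
  shows "\<forall>t \<ge> 0. \<forall>\<rho>. density \<rho> \<longrightarrow>
           vn_entropy (semigroup L t \<rho>) - vn_entropy \<rho>
             \<ge> (1 - exp (- 2 * (1 - r) * t)) * (ln 2 - vn_entropy \<rho>)"
proof (intro allI impI)
  define S where "S = {\<bar>x \<bullet> (That *v x)\<bar> | x. norm x = 1}"
  have Sb: "s \<le> 1" if "s \<in> S" for s
  proof -
    obtain x where x: "s = \<bar>x \<bullet> (That *v x)\<bar>" "norm x = 1" using \<open>s \<in> S\<close> S_def by blast
    have "\<bar>x \<bullet> (That *v x)\<bar> \<le> norm x * norm (That *v x)" by (rule Cauchy_Schwarz_ineq2)
    also have "\<dots> \<le> 1" using That_contr[OF chan rep, of x] x(2) by simp
    finally show ?thesis using x by simp
  qed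
  have Sne: "S \<noteq> {}"
  proof -
    have "(norm (vector [1,0,0] :: real^3))^2 = 1^2" unfolding norm3 by simp
    then have "norm (vector [1,0,0] :: real^3) = 1" using power2_eq_imp_eq norm_ge_zero zero_le_one by blast
    then show ?thesis unfolding S_def by blast
  qed
  have bdd: "bdd_above S" using Sb by (auto simp: bdd_above_def)
  have r1: "r \<le> 1" unfolding r_def S_def[symmetric] using Sne Sb by (rule cSup_least)
  have rb: "v \<bullet> (That *v v) \<le> r * (v \<bullet> v)" for v
  proof (cases "v = 0")
    case False
    define u where "u = (1 / norm v) *\<^sub>R v"
    have "norm u = 1" using False by (simp add: u_def)
    then have "\<bar>u \<bullet> (That *v u)\<bar> \<in> S" unfolding S_def by blast
    then have "\<bar>u \<bullet> (That *v u)\<bar> \<le> r" unfolding r_def S_def[symmetric] using bdd by (rule cSup_upper)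
    then have a: "u \<bullet> (That *v u) \<le> r" by simp
    have "u \<bullet> (That *v u) = (v \<bullet> (That *v v)) / (norm v)^2"
      by (simp add: u_def matrix_vector_mult_scaleR power2_eq_square)
    moreover have "(norm v)^2 = v \<bullet> v" by (simp add: power2_norm_eq_inner)
    moreover have "(norm v)^2 > 0" using False by simp
    ultimately show ?thesis using a by (simp add: divide_le_eq)
  qed simp
  fix t :: real and \<rho> :: cmat
  assume t: "t \<ge> 0" and d: "density \<rho>"
  obtain x where x: "\<rho> = bloch x" "norm x \<le> 1" using density_bloch[OF d] by blast
  define y where "y = ysol (That - mat 1) x t"
  define l where "l = exp (- (1 - r) * t)"
  have sg: "semigroup L t (bloch x) = bloch y" unfolding y_def by (rule semigroup_bloch[OF chan rep L_def])
  have yb: "norm y \<le> l * norm x" unfolding y_def l_def by (rule ysol_decay[OF rb t])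
  have l0: "0 \<le> l" and l1: "l \<le> 1" using r1 t by (auto simp: l_def mult_nonpos_nonneg)
  have lx: "l * norm x \<le> 1" using l0 l1 x(2) by (simp add: mult_le_one)
  have y1: "norm y \<le> 1" using yb lx by linarith
  have "fH (norm y) \<le> fH (l * norm x)" using yb lx by (intro fH_mono) auto
  also have "\<dots> \<le> l^2 * fH (norm x)" using l0 l1 x(2) by (intro fH_scale) auto
  also have "l^2 = exp (- 2 * (1 - r) * t)"
    by (simp add: l_def power2_eq_square exp_add[symmetric])
  finally have key: "fH (norm y) \<le> exp (- 2 * (1 - r) * t) * fH (norm x)" .
  show "vn_entropy (semigroup L t \<rho>) - vn_entropy \<rho>
             \<ge> (1 - exp (- 2 * (1 - r) * t)) * (ln 2 - vn_entropy \<rho>)"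
    unfolding x(1) sg vn_bloch[OF y1] vn_bloch[OF x(2)] using key by (simp add: algebra_simps)
qed

end
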